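(* Let $U$ be a compact right topological semigroup and let $M$ be a finite monoid acting on $U$ by continuous endomorphisms. Assume that $ab=b$ for all $a,b\in M$ with $b\neq 1_M$. Then there exists an idempotent $u_1\in E(U)$, minimal with respect to $\leq^U$ in $E(U)$, such that (i) $u_1\in I(U)$, and (ii) $a(u_1)=b(u_1)$ for all $a,b\in M$ with $a\neq 1_M\neq b$.
   Context: The identity $1_M$ acts as the identity; each $u\mapsto a(u)$ is a continuous semigroup endomorphism of $U$. $U$ right topological: $x\mapsto xu$ continuous for each $u$. $E(U)$ = idempotents; $u\leq^U v$ iff $uv=vu=u$; $I(U)$ = smallest compact two-sided ideal of $U$. *)

theory Defs
  imports "HOL-Analysis.Analysis"
begin

definition right_topological_semigroup :: "('a::{topological_space,semigroup_mult}) set \<Rightarrow> bool" where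
  "right_topological_semigroup U \<longleftrightarrow>
     (\<forall>x\<in>U. \<forall>y\<in>U. x * y \<in> U) \<and> (\<forall>u\<in>U. continuous_on U (\<lambda>x. x * u))"

definition idempotents :: "('a::semigroup_mult) set \<Rightarrow> 'a set" where
  "idempotents U = {u\<in>U. u * u = u}"

definition idem_le :: "'a::semigroup_mult \<Rightarrow> 'a \<Rightarrow> bool" where
  "idem_le u v \<longleftrightarrow> u * v = u \<and> v * u = u"

definition minimal_idempotent :: "('a::semigroup_mult) set \<Rightarrow> 'a \<Rightarrow> bool" where
  "minimal_idempotent U u \<longleftrightarrow>
     u \<in> idempotents U \<and> (\<forall>v\<in>idempotents U. idem_le v u \<longrightarrow> v = u)"

definition two_sided_ideal :: "('a::semigroup_mult) set \<Rightarrow> 'a set \<Rightarrow> bool" where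
  "two_sided_ideal U J \<longleftrightarrow> J \<noteq> {} \<and> J \<subseteq> U \<and>
     (\<forall>x\<in>U. \<forall>y\<in>J. x * y \<in> J \<and> y * x \<in> J)"

definition smallest_ideal :: "('a::semigroup_mult) set \<Rightarrow> 'a set" where
  "smallest_ideal U = \<Inter>{J. two_sided_ideal U J}"

definition monoid_acts_by_cont_endos ::
  "('m::monoid_mult) set \<Rightarrow> ('m \<Rightarrow> 'a \<Rightarrow> 'a) \<Rightarrow> ('a::{topological_space,semigroup_mult}) set \<Rightarrow> bool" where
  "monoid_acts_by_cont_endos M act U \<longleftrightarrow>
     1 \<in> M \<and> (\<forall>a\<in>M. \<forall>b\<in>M. a * b \<in> M) \<and>
     (\<forall>u\<in>U. act 1 u = u) \<and>
     (\<forall>a\<in>M. \<forall>b\<in>M. \<forall>u\<in>U. act (a * b) u = act a (act b u)) \<and>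
     (\<forall>a\<in>M. act a ` U \<subseteq> U \<and> continuous_on U (act a) \<and>
        (\<forall>x\<in>U. \<forall>y\<in>U. act a (x * y) = act a x * act a y))"

end

theory Submission
  imports Defs
begin

lemma zorn_min:
  fixes S :: "'a::t2_space set"
  assumes PS: "P S" and PA: "\<And>A. P A \<Longrightarrow> compact A \<and> A \<noteq> {}"
    and ch: "\<And>C. C \<noteq> {} \<Longrightarrow> (\<forall>A\<in>C. P A) \<Longrightarrow> (\<forall>A\<in>C. \<forall>B\<in>C. A \<subseteq> B \<or> B \<subseteq> A)
               \<Longrightarrow> \<Inter>C \<noteq> {} \<Longrightarrow> compact (\<Inter>C) \<Longrightarrow> P (\<Inter>C)"
  shows "\<exists>A. P A \<and> A \<subseteq> S \<and> (\<forall>B. P B \<and> B \<subseteq> A \<longrightarrow> B = A)"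
proof -
  let ?A = "{A. P A \<and> A \<subseteq> S}"
  have po: "partial_order_on ?A (relation_of (\<lambda>a b. b \<subseteq> a) ?A)"
    unfolding partial_order_on_def preorder_on_def refl_on_def trans_on_def antisym_on_def relation_of_def
    by auto
  have "\<exists>m \<in> ?A. \<forall>a \<in> ?A. m \<supseteq> a \<longrightarrow> a = m"
  proof (rule predicate_Zorn[OF po])
    fix C assume C: "C \<in> Chains (relation_of (\<lambda>a b. b \<subseteq> a) ?A)"
    show "\<exists>u \<in> ?A. \<forall>a \<in> C. u \<subseteq> a"
    proof (cases "C = {}")
      case True then show ?thesis using PS by auto
    next
      case False
      have CA: "C \<subseteq> ?A" and tot: "\<forall>A\<in>C. \<forall>B\<in>C. A \<subseteq> B \<or> B \<subseteq> A"
        using C False unfolding Chains_def relation_of_def by blast+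
      obtain X where X: "X \<in> C" using False by auto
      have Xc: "compact X" "X \<noteq> {}" using PA CA X by auto
      have ne: "X \<inter> \<Inter>C \<noteq> {}"
      proof (rule compact_imp_fip[OF Xc(1)])
        fix T assume "T \<in> C" then show "closed T" using PA CA compact_imp_closed by blast
      next
        fix F' assume F': "finite F'" "F' \<subseteq> C"
        show "X \<inter> \<Inter>F' \<noteq> {}"
        proof (cases "F' = {}")
          case True then show ?thesis using Xc by auto
        next
          case False
          have "subset.chain UNIV F'" using F' tot unfolding subset_chain_def by blast
          then have "\<Inter>F' \<in> F'" using Inter_in_chain F' False by blast
          then have Y: "\<Inter>F' \<in> C" using F' by blast
          then have "\<Inter>F' \<noteq> {}" using PA CA by blast
          then show ?thesis using tot X Y Xc
            by (metis inf.absorb1 inf.absorb2)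
        qed
      qed
      have eq: "\<Inter>C = X \<inter> \<Inter>C" using X by blast
      have "compact (\<Inter>C)"
        using eq closed_Int_compact[of "\<Inter>C" X] Xc PA CA compact_imp_closed
        by (metis closed_Inter inf_commute mem_Collect_eq subsetD)
      moreover have "\<Inter>C \<noteq> {}" using ne eq by simp
      ultimately have "P (\<Inter>C)" using ch False CA tot by blast
      moreover have "\<Inter>C \<subseteq> S" using X CA by blast
      ultimately show ?thesis by blast
    qed
  qed
  then obtain m where "m \<in> ?A" "\<forall>a \<in> ?A. m \<supseteq> a \<longrightarrow> a = m" by blast
  then have "P m \<and> m \<subseteq> S \<and> (\<forall>B. P B \<and> B \<subseteq> m \<longrightarrow> B = m)"
    by (metis (mono_tags, lifting) mem_Collect_eq order.trans)
  then show ?thesis by blast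
qed

lemma rts_image_compact:
  fixes S :: "('a::{t2_space,semigroup_mult}) set"
  assumes "right_topological_semigroup S" "compact A" "A \<subseteq> S" "x \<in> S"
  shows "compact ((\<lambda>y. y * x) ` A)"
proof -
  have "continuous_on S (\<lambda>y. y * x)" using assms unfolding right_topological_semigroup_def by blast
  then have "continuous_on A (\<lambda>y. y * x)" using continuous_on_subset assms by blast
  then show ?thesis using compact_continuous_image assms by blast
qed

lemma ellis:
  fixes S :: "('a::{t2_space,semigroup_mult}) set"
  assumes rts: "right_topological_semigroup S" and cS: "compact S" and ne: "S \<noteq> {}"
  shows "\<exists>e\<in>S. e * e = e"
proof -
  define P where "P A \<longleftrightarrow> A \<subseteq> S \<and> A \<noteq> {} \<and> compact A \<and> (\<forall>x\<in>A. \<forall>y\<in>A. x * y \<in> A)" for A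
  have sg: "\<forall>x\<in>S. \<forall>y\<in>S. x * y \<in> S" using rts unfolding right_topological_semigroup_def by blast
  have PS: "P S" using sg cS ne unfolding P_def by blast
  have PA': "\<And>A. P A \<Longrightarrow> compact A \<and> A \<noteq> {}" unfolding P_def by blast
  have PC: "P (\<Inter>C)" if hC: "C \<noteq> {}" "\<forall>A\<in>C. P A" "\<Inter>C \<noteq> {}" "compact (\<Inter>C)" for C
  proof -
    obtain X where X: "X \<in> C" using hC(1) by blast
    have "\<Inter>C \<subseteq> S" using X hC(2) unfolding P_def by blast
    moreover have "\<forall>x\<in>\<Inter>C. \<forall>y\<in>\<Inter>C. x * y \<in> \<Inter>C"
    proof (intro ballI InterI)
      fix x y A assume "x \<in> \<Inter>C" "y \<in> \<Inter>C" "A \<in> C"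
      then show "x * y \<in> A" using hC(2) unfolding P_def by blast
    qed
    ultimately show ?thesis using hC unfolding P_def by blast
  qed
  have "\<exists>A. P A \<and> A \<subseteq> S \<and> (\<forall>B. P B \<and> B \<subseteq> A \<longrightarrow> B = A)"
  proof (rule zorn_min[of P S, OF PS PA'])
    fix C assume "C \<noteq> {}" "\<forall>A\<in>C. P A" "\<Inter>C \<noteq> {}" "compact (\<Inter>C)"
    then show "P (\<Inter>C)" by (rule PC)
  qed
  then obtain A where PA: "P A" and minA: "\<forall>B. P B \<and> B \<subseteq> A \<longrightarrow> B = A"
    by blast
  from PA have AS: "A \<subseteq> S" and Ane: "A \<noteq> {}" and cA: "compact A" and sA: "\<forall>x\<in>A. \<forall>y\<in>A. x * y \<in> A"
    unfolding P_def by auto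
  obtain x where x: "x \<in> A" using Ane by blast
  have "P ((\<lambda>y. y * x) ` A)"
    unfolding P_def
  proof (intro conjI)
    show "(\<lambda>y. y * x) ` A \<subseteq> S" using sA x AS by blast
    show "(\<lambda>y. y * x) ` A \<noteq> {}" using Ane by blast
    show "compact ((\<lambda>y. y * x) ` A)" using rts_image_compact[OF rts cA AS] x AS by blast
    show "\<forall>a\<in>(\<lambda>y. y * x) ` A. \<forall>b\<in>(\<lambda>y. y * x) ` A. a * b \<in> (\<lambda>y. y * x) ` A"
    proof (intro ballI)
      fix a b assume "a \<in> (\<lambda>y. y * x) ` A" "b \<in> (\<lambda>y. y * x) ` A"
      then obtain a' b' where "a' \<in> A" "b' \<in> A" "a = a' * x" "b = b' * x" by blast
      then have "a * b = (a' * x * b') * x" "a' * x * b' \<in> A" using sA x by (auto simp: mult.assoc)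
      then show "a * b \<in> (\<lambda>y. y * x) ` A" by blast
    qed
  qed
  moreover have "(\<lambda>y. y * x) ` A \<subseteq> A" using sA x by blast
  ultimately have imA: "(\<lambda>y. y * x) ` A = A" using minA by blast
  define B where "B = A \<inter> (\<lambda>y. y * x) -` {x}"
  have "P B"
    unfolding P_def
  proof (intro conjI)
    show "B \<subseteq> S" using AS B_def by blast
    obtain a where "a \<in> A" "a * x = x" using imA x by (metis imageE)
    then show "B \<noteq> {}" unfolding B_def by blast
    have "continuous_on S (\<lambda>y. y * x)" using rts x AS unfolding right_topological_semigroup_def by blast
    then have "continuous_on A (\<lambda>y. y * x)" using continuous_on_subset AS by blast
    then have "closedin (top_of_set A) B" unfolding B_def
      using continuous_closedin_preimage closed_singleton by blast
    then show "compact B" using closedin_compact cA by blast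
    show "\<forall>a\<in>B. \<forall>b\<in>B. a * b \<in> B"
    proof (intro ballI)
      fix a b assume "a \<in> B" "b \<in> B"
      then have "a \<in> A" "b \<in> A" "a * x = x" "b * x = x" unfolding B_def by auto
      then have "a * b \<in> A" "(a * b) * x = x" using sA by (auto simp: mult.assoc)
      then show "a * b \<in> B" unfolding B_def by blast
    qed
  qed
  moreover have "B \<subseteq> A" unfolding B_def by blast
  ultimately have "B = A" using minA by blast
  then have "x * x = x" using x unfolding B_def by blast
  then show ?thesis using x AS by blast
qed

lemma min_below:
  fixes S :: "('a::{t2_space,semigroup_mult}) set"
  assumes rts: "right_topological_semigroup S" and cS: "compact S"
    and vS: "v \<in> S" and vv: "v * v = v"
  shows "\<exists>u. minimal_idempotent S u \<and> u \<in> smallest_ideal S \<and> idem_le u v"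
proof -
  have sg: "\<forall>x\<in>S. \<forall>y\<in>S. x * y \<in> S" using rts unfolding right_topological_semigroup_def by blast
  define P where "P L \<longleftrightarrow> L \<subseteq> (\<lambda>y. y * v) ` S \<and> L \<noteq> {} \<and> compact L \<and> (\<forall>x\<in>S. \<forall>y\<in>L. x * y \<in> L)" for L
  have SvS: "(\<lambda>y. y * v) ` S \<subseteq> S" using sg vS by blast
  have PS: "P ((\<lambda>y. y * v) ` S)" unfolding P_def
  proof (intro conjI)
    show "compact ((\<lambda>y. y * v) ` S)" using rts_image_compact[OF rts cS _ vS] by blast
    show "(\<lambda>y. y * v) ` S \<noteq> {}" using vS by blast
    show "\<forall>x\<in>S. \<forall>y\<in>(\<lambda>y. y * v) ` S. x * y \<in> (\<lambda>y. y * v) ` S"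
    proof (intro ballI)
      fix x y assume "x \<in> S" "y \<in> (\<lambda>y. y * v) ` S"
      then obtain z where "z \<in> S" "y = z * v" by blast
      then have "x * y = (x * z) * v" "x * z \<in> S" using sg \<open>x \<in> S\<close> by (auto simp: mult.assoc)
      then show "x * y \<in> (\<lambda>y. y * v) ` S" by blast
    qed
  qed simp
  have PA': "\<And>A. P A \<Longrightarrow> compact A \<and> A \<noteq> {}" unfolding P_def by blast
  have PC: "P (\<Inter>C)" if hC: "C \<noteq> {}" "\<forall>A\<in>C. P A" "\<Inter>C \<noteq> {}" "compact (\<Inter>C)" for C
  proof -
    obtain X where X: "X \<in> C" using hC(1) by blast
    have "\<Inter>C \<subseteq> (\<lambda>y. y * v) ` S" using X hC(2) unfolding P_def by blast
    moreover have "\<forall>x\<in>S. \<forall>y\<in>\<Inter>C. x * y \<in> \<Inter>C"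
    proof (intro ballI InterI)
      fix x y A assume "x \<in> S" "y \<in> \<Inter>C" "A \<in> C"
      then show "x * y \<in> A" using hC(2) unfolding P_def by blast
    qed
    ultimately show ?thesis using hC unfolding P_def by blast
  qed
  have "\<exists>A. P A \<and> A \<subseteq> (\<lambda>y. y * v) ` S \<and> (\<forall>B. P B \<and> B \<subseteq> A \<longrightarrow> B = A)"
  proof (rule zorn_min[of P, OF PS PA'])
    fix C assume "C \<noteq> {}" "\<forall>A\<in>C. P A" "\<Inter>C \<noteq> {}" "compact (\<Inter>C)"
    then show "P (\<Inter>C)" by (rule PC)
  qed
  then obtain L where PL: "P L" and minL: "\<forall>B. P B \<and> B \<subseteq> L \<longrightarrow> B = L"
    by blast
  from PL have LSv: "L \<subseteq> (\<lambda>y. y * v) ` S" and Lne: "L \<noteq> {}" and cL: "compact L"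
    and iL: "\<forall>x\<in>S. \<forall>y\<in>L. x * y \<in> L"
    unfolding P_def by auto
  have LS: "L \<subseteq> S" using LSv SvS by blast
  have SxL: "(\<lambda>y. y * x) ` S = L" if xL: "x \<in> L" for x
  proof -
    have "P ((\<lambda>y. y * x) ` S)" unfolding P_def
    proof (intro conjI)
      show "(\<lambda>y. y * x) ` S \<subseteq> (\<lambda>y. y * v) ` S" using iL xL LSv by blast
      show "(\<lambda>y. y * x) ` S \<noteq> {}" using vS by blast
      show "compact ((\<lambda>y. y * x) ` S)" using rts_image_compact[OF rts cS _] xL LS by blast
      show "\<forall>a\<in>S. \<forall>b\<in>(\<lambda>y. y * x) ` S. a * b \<in> (\<lambda>y. y * x) ` S"
      proof (intro ballI)
        fix a b assume "a \<in> S" "b \<in> (\<lambda>y. y * x) ` S"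
        then obtain z where "z \<in> S" "b = z * x" by blast
        then have "a * b = (a * z) * x" "a * z \<in> S" using sg \<open>a \<in> S\<close> by (auto simp: mult.assoc)
        then show "a * b \<in> (\<lambda>y. y * x) ` S" by blast
      qed
    qed
    moreover have "(\<lambda>y. y * x) ` S \<subseteq> L" using iL xL by blast
    ultimately show ?thesis using minL by blast
  qed
  have rtsL: "right_topological_semigroup L"
    unfolding right_topological_semigroup_def
  proof (intro conjI ballI)
    fix x y assume "x \<in> L" "y \<in> L" then show "x * y \<in> L" using iL LS by blast
  next
    fix u assume "u \<in> L"
    then have "continuous_on S (\<lambda>x. x * u)" using rts LS unfolding right_topological_semigroup_def by blast
    then show "continuous_on L (\<lambda>x. x * u)" using continuous_on_subset LS by blast
  qed
  obtain w where wL: "w \<in> L" and ww: "w * w = w" using ellis[OF rtsL cL Lne] by blast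
  obtain y where yS: "y \<in> S" and wy: "w = y * v" using wL LSv by blast
  have wv: "w * v = w" using wy vv by (simp add: mult.assoc)
  define u where "u = v * w"
  have uL: "u \<in> L" using iL vS wL u_def by blast
  have uS: "u \<in> S" using uL LS by blast
  have uu: "u * u = u" unfolding u_def using wv ww by (metis mult.assoc)
  have uv: "u * v = u" unfolding u_def using wv by (simp add: mult.assoc)
  have vu: "v * u = u" unfolding u_def using vv by (metis mult.assoc)
  have "minimal_idempotent S u"
    unfolding minimal_idempotent_def idempotents_def
  proof (intro conjI ballI impI)
    show "u \<in> {u \<in> S. u * u = u}" using uS uu by blast
    fix e assume "e \<in> {u \<in> S. u * u = u}" and le: "idem_le e u"
    then have eS: "e \<in> S" and ee: "e * e = e" by auto
    from le have eu: "e * u = e" and ue: "u * e = e" unfolding idem_le_def by auto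
    have eL: "e \<in> L" using eu iL eS uL by metis
    then have "u \<in> (\<lambda>y. y * e) ` S" using SxL uL by blast
    then obtain z where "u = z * e" by blast
    then have "u * e = u" using ee by (simp add: mult.assoc)
    then show "e = u" using ue by simp
  qed
  moreover have "u \<in> smallest_ideal S"
    unfolding smallest_ideal_def
  proof (rule InterI)
    fix J assume "J \<in> {J. two_sided_ideal S J}"
    then have J: "J \<noteq> {}" "J \<subseteq> S" "\<forall>x\<in>S. \<forall>y\<in>J. x * y \<in> J \<and> y * x \<in> J"
      unfolding two_sided_ideal_def by auto
    obtain j where jJ: "j \<in> J" using J(1) by blast
    have juJ: "j * u \<in> J" using J(3) uS jJ by blast
    have juL: "j * u \<in> L" using iL uL jJ J(2) by blast
    then have "u \<in> (\<lambda>y. y * (j * u)) ` S" using SxL uL by blast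
    then obtain z where "z \<in> S" "u = z * (j * u)" by blast
    then show "u \<in> J" using J(3) juJ by metis
  qed
  moreover have "idem_le u v" unfolding idem_le_def using uv vu by blast
  ultimately show ?thesis by blast
qed

theorem lemma2p6:
  fixes U :: "('a::{t2_space,semigroup_mult}) set"
    and M :: "('m::monoid_mult) set"
    and act :: "'m \<Rightarrow> 'a \<Rightarrow> 'a"
  assumes "U \<noteq> {}" and "compact U" and "right_topological_semigroup U"
    and "finite M" and "monoid_acts_by_cont_endos M act U"
    and "\<forall>a\<in>M. \<forall>b\<in>M. b \<noteq> 1 \<longrightarrow> a * b = b"
  shows "\<exists>u1. minimal_idempotent U u1 \<and> u1 \<in> smallest_ideal U \<and>
           (\<forall>a\<in>M. \<forall>b\<in>M. a \<noteq> 1 \<and> b \<noteq> 1 \<longrightarrow> act a u1 = act b u1)"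
proof -
  note rts = assms(3) and cU = assms(2) and Une = assms(1) and rz = assms(6)
  have sg: "\<forall>x\<in>U. \<forall>y\<in>U. x * y \<in> U" using rts unfolding right_topological_semigroup_def by blast
  have act_comp: "\<And>a b u. a \<in> M \<Longrightarrow> b \<in> M \<Longrightarrow> u \<in> U \<Longrightarrow> act (a * b) u = act a (act b u)"
    and act_U: "\<And>a. a \<in> M \<Longrightarrow> act a ` U \<subseteq> U"
    and act_cont: "\<And>a. a \<in> M \<Longrightarrow> continuous_on U (act a)"
    and act_hom: "\<And>a x y. a \<in> M \<Longrightarrow> x \<in> U \<Longrightarrow> y \<in> U \<Longrightarrow> act a (x * y) = act a x * act a y"
    using assms(5) unfolding monoid_acts_by_cont_endos_def by blast+
  show ?thesis
  proof (cases "\<exists>e\<in>M. e \<noteq> 1")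
    case False
    obtain v where "v \<in> U" "v * v = v" using ellis[OF rts cU Une] by blast
    then obtain u where "minimal_idempotent U u \<and> u \<in> smallest_ideal U"
      using min_below[OF rts cU] by blast
    then show ?thesis using False by blast
  next
    case True
    then obtain e where eM: "e \<in> M" and e1: "e \<noteq> 1" by blast
    define V where "V = act e ` U"
    have VU: "V \<subseteq> U" using act_U eM V_def by blast
    have cV: "compact V" unfolding V_def using compact_continuous_image act_cont eM cU by blast
    have Vne: "V \<noteq> {}" using Une V_def by blast
    have rtsV: "right_topological_semigroup V"
      unfolding right_topological_semigroup_def
    proof (intro conjI ballI)
      fix x y assume "x \<in> V" "y \<in> V"
      then obtain x' y' where "x' \<in> U" "y' \<in> U" "x = act e x'" "y = act e y'" unfolding V_def by blast
      then have "x * y = act e (x' * y')" "x' * y' \<in> U" using act_hom eM sg by auto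
      then show "x * y \<in> V" unfolding V_def by blast
    next
      fix u assume "u \<in> V"
      then have "continuous_on U (\<lambda>x. x * u)" using rts VU unfolding right_topological_semigroup_def by blast
      then show "continuous_on V (\<lambda>x. x * u)" using continuous_on_subset VU by blast
    qed
    obtain v0 where "v0 \<in> V" "v0 * v0 = v0" using ellis[OF rtsV cV Vne] by blast
    then obtain v where mv: "minimal_idempotent V v" using min_below[OF rtsV cV] by blast
    then have vV: "v \<in> V" and vv: "v * v = v" unfolding minimal_idempotent_def idempotents_def by auto
    have vU: "v \<in> U" using vV VU by blast
    obtain u where mu: "minimal_idempotent U u" and uI: "u \<in> smallest_ideal U" and uv: "idem_le u v"
      using min_below[OF rts cU vU vv] by blast
    have uU: "u \<in> U" and uu: "u * u = u" using mu unfolding minimal_idempotent_def idempotents_def by auto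
    have key: "act a u = v" if aM: "a \<in> M" and a1: "a \<noteq> 1" for a
    proof -
      obtain x where xU: "x \<in> U" and vx: "v = act e x" using vV V_def by blast
      have av: "act a v = v" using vx act_comp[OF aM eM xU] rz aM eM e1 by metis
      have auU: "act a u \<in> U" using act_U aM uU by blast
      have "act e (act a u) = act a u" using act_comp[OF eM aM uU] rz aM eM a1 by metis
      then have auV: "act a u \<in> V" using auU V_def by (metis image_eqI)
      have "act a u * act a u = act a u" using act_hom[OF aM uU uU] uu by simp
      then have idem: "act a u \<in> idempotents V" using auV unfolding idempotents_def by blast
      have "u * v = u" "v * u = u" using uv unfolding idem_le_def by auto
      then have "act a u * v = act a u" "v * act a u = act a u"
        using act_hom[OF aM uU vU] act_hom[OF aM vU uU] av by auto
      then have "idem_le (act a u) v" unfolding idem_le_def by blast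
      then show ?thesis using mv idem unfolding minimal_idempotent_def by blast
    qed
    show ?thesis using mu uI key by auto
  qed
qed

end
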